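(* Let $m>0$ and let $U:[0,\infty)\to\mathbb{R}$ satisfy: $U\in C^{2}((0,\infty))\cap C^{1}([0,\infty))$, $U(0)=0$, $U'(q)>0$ for all $q>0$, and for each $E>0$ there is a unique $q_{\max}(E)>0$ with $U(q_{\max}(E))=E$. Consider trajectories $q(t)\ge 0$ of the conservative system $m\ddot q+U'(q)=0$, which conserve the energy $E=\frac12 m\dot q^2+U(q)$. Fix arbitrary constants $K>0$ and $M>0$. Define the energy coordinate \[ x(q)=\sqrt{\frac{2U(q)}{K}}, \] and define a reparametrised time $\tau$ along the trajectory by \[ \frac{d\tau}{dt}=\sqrt{\frac{M}{m}}\,\frac{dx}{dq}(q(t)). \] Then along every nontrivial conservative trajectory, $x$ as a function of $\tau$ satisfies \[ M\frac{d^{2}x}{d\tau^{2}}+Kx=0 . \]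
   Context: $q$ is the contact penetration, $m$ the mass, $U$ the contact potential; a nontrivial trajectory is one with energy $E>0$. *)

theory Defs
  imports "HOL-Analysis.Analysis"
begin

definition xcoord :: "real \<Rightarrow> (real \<Rightarrow> real) \<Rightarrow> real \<Rightarrow> real" where
  "xcoord K U s = sqrt (2 * U s / K)"

end

theory Submission
  imports Defs "HOL-Complex_Analysis.Conformal_Mappings"
begin

theorem theorem2:
  fixes m K M E :: real
    and U U' U'' :: "real \<Rightarrow> real"
    and I :: "real set"
    and q q' q'' \<tau> :: "real \<Rightarrow> real"
  assumes m_pos: "m > 0" and K_pos: "K > 0" and M_pos: "M > 0"
    \<comment> \<open>U in C^1([0,\<infinity>)) with derivative U'\<close>
    and U_C1: "\<And>s. s \<ge> 0 \<Longrightarrow> (U has_real_derivative U' s) (at s within {0..})"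
    and U'_cont: "continuous_on {0..} U'"
    \<comment> \<open>U in C^2((0,\<infinity>)) with second derivative U''\<close>
    and U_C2: "\<And>s. s > 0 \<Longrightarrow> (U' has_real_derivative U'' s) (at s)"
    and U''_cont: "continuous_on {0<..} U''"
    and U0: "U 0 = 0"
    and U'_pos: "\<And>s. s > 0 \<Longrightarrow> U' s > 0"
    and qmax: "\<And>e. e > 0 \<Longrightarrow> \<exists>!qm. qm > 0 \<and> U qm = e"
    \<comment> \<open>a trajectory of m q'' + U'(q) = 0 on an open time interval I, with q \<ge> 0\<close>
    and I_open: "open I" and I_int: "is_interval I" and I_ne: "I \<noteq> {}"
    and q_d1: "\<And>t. t \<in> I \<Longrightarrow> (q has_real_derivative q' t) (at t)"
    and q_d2: "\<And>t. t \<in> I \<Longrightarrow> (q' has_real_derivative q'' t) (at t)"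
    and q_nonneg: "\<And>t. t \<in> I \<Longrightarrow> q t \<ge> 0"
    and eqn: "\<And>t. t \<in> I \<Longrightarrow> m * q'' t + U' (q t) = 0"
    \<comment> \<open>conserved energy E, nontrivial: E > 0\<close>
    and energy: "\<And>t. t \<in> I \<Longrightarrow> m * (q' t)\<^sup>2 / 2 + U (q t) = E"
    and E_pos: "E > 0"
    \<comment> \<open>reparametrised time: d\<tau>/dt = sqrt(M/m) * dx/dq (q(t))\<close>
    and tau_deriv: "\<And>t. t \<in> I \<Longrightarrow>
        (\<tau> has_real_derivative sqrt (M / m) * deriv (xcoord K U) (q t)) (at t)"
  shows "\<forall>s \<in> \<tau> ` I.
           (let X = (\<lambda>r. xcoord K U (q (inv_into I \<tau> r))) in
              X differentiable (at s) \<and> deriv X differentiable (at s) \<and>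
              M * deriv (deriv X) s + K * X s = 0)"
proof -
  have Ucont: "continuous_on {0..} U"
    unfolding continuous_on_eq_continuous_within using U_C1 by (auto intro: DERIV_continuous)
  have UD: "(U has_real_derivative U' s) (at s)" if "s > 0" for s
  proof -
    have "(U has_real_derivative U' s) (at s within {0<..})"
    proof -
      have a: "(U has_real_derivative U' s) (at s within {0..})" using U_C1 that by simp
      have b: "{0<..} \<subseteq> {0::real..}" by auto
      show ?thesis by (rule DERIV_subset[OF a b])
    qed
    thus ?thesis using that at_within_open[of s "{0<..}"] by simp
  qed
  have Upos: "U s > 0" if "s > 0" for s
  proof -
    have c: "continuous_on {0..s} U"
      using Ucont by (rule continuous_on_subset) auto
    have d: "\<exists>y. DERIV U x :> y \<and> y > 0" if "0 < x" "x < s" for x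
      using UD[OF that(1)] U'_pos[OF that(1)] by blast
    have "U 0 < U s"
      using DERIV_pos_imp_increasing_open[OF that d c] by blast
    thus ?thesis using U0 by simp
  qed
  define xd where "xd s = U' s / (K * xcoord K U s)" for s
  have xpos: "xcoord K U s > 0" if "s > 0" for s
    using Upos[OF that] K_pos by (simp add: xcoord_def)
  have xdpos: "xd s > 0" if "s > 0" for s
    using xpos[OF that] U'_pos[OF that] K_pos by (simp add: xd_def)
  have xD: "(xcoord K U has_real_derivative xd s) (at s)" if "s > 0" for s
  proof -
    have a: "2 * U s / K > 0" using Upos[OF that] K_pos by simp
    have "((\<lambda>s. sqrt (2 * U s / K)) has_real_derivative
            inverse (sqrt (2 * U s / K)) / 2 * (2 * U' s / K)) (at s)"
    proof -
      have d: "((\<lambda>s. 2 * U s / K) has_real_derivative 2 * U' s / K) (at s)"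
        using UD[OF that] K_pos by (auto intro!: derivative_eq_intros)
      show ?thesis using DERIV_chain2[OF DERIV_real_sqrt[OF a] d] by simp
    qed
    moreover have "inverse (sqrt (2 * U s / K)) / 2 * (2 * U' s / K) = xd s"
      using K_pos by (simp add: xd_def xcoord_def field_simps)
    ultimately show ?thesis by (simp add: xcoord_def[abs_def])
  qed
  have qpos: "q t > 0" if t: "t \<in> I" for t
  proof (rule ccontr)
    assume "\<not> q t > 0"
    hence q0: "q t = 0" using q_nonneg[OF t] by simp
    obtain d where d: "d > 0" "ball t d \<subseteq> I" using I_open t openE by blast
    have "q' t = 0"
    proof (rule DERIV_local_min[OF q_d1[OF t] d(1)], intro allI impI)
      fix y assume "\<bar>t - y\<bar> < d"
      hence "y \<in> I" using d(2) by (auto simp: dist_real_def)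
      thus "q t \<le> q y" using q0 q_nonneg by simp
    qed
    hence "E = 0" using energy[OF t] q0 U0 by simp
    thus False using E_pos by simp
  qed
  define T where "T t = sqrt (M / m) * xd (q t)" for t
  have Tpos: "T t > 0" if "t \<in> I" for t
    using xdpos[OF qpos[OF that]] m_pos M_pos by (simp add: T_def)
  have tauD: "(\<tau> has_real_derivative T t) (at t)" if t: "t \<in> I" for t
    using tau_deriv[OF t] DERIV_imp_deriv[OF xD[OF qpos[OF t]]] by (simp add: T_def)
  have taucont: "continuous_on I \<tau>"
    by (intro continuous_at_imp_continuous_on ballI DERIV_isCont[OF tauD])
  have mono: "\<tau> a < \<tau> b" if "a \<in> I" "b \<in> I" "a < b" for a b
  proof -
    have sub: "{a..b} \<subseteq> I"
    proof
      fix y assume "y \<in> {a..b}"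
      hence "a \<le> y" "y \<le> b" by auto
      thus "y \<in> I" using I_int[unfolded is_interval_1] that(1,2) by blast
    qed
    have c: "continuous_on {a..b} \<tau>" using taucont sub by (rule continuous_on_subset)
    have d: "\<exists>y. DERIV \<tau> x :> y \<and> y > 0" if "a < x" "x < b" for x
    proof -
      have x: "x \<in> I" using sub that by auto
      show ?thesis using tauD[OF x] Tpos[OF x] by blast
    qed
    show ?thesis using DERIV_pos_imp_increasing_open[OF that(3) d c] by blast
  qed
  have inj: "inj_on \<tau> I"
  proof (rule inj_onI)
    fix a b assume ab: "a \<in> I" "b \<in> I" "\<tau> a = \<tau> b"
    show "a = b"
    proof (rule ccontr)
      assume "a \<noteq> b"
      hence "a < b \<or> b < a" by linarith
      thus False using mono[OF ab(1,2)] mono[OF ab(2,1)] ab(3) by auto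
    qed
  qed
  define g where "g = inv_into I \<tau>"
  have gtau: "g (\<tau> z) = z" if "z \<in> I" for z
    using inj that by (simp add: g_def)
  have gD: "(g has_real_derivative inverse (T t)) (at (\<tau> t))" if t: "t \<in> I" for t
    by (rule has_field_derivative_inverse_strong[OF tauD[OF t] _ I_open t taucont gtau])
       (use Tpos[OF t] in auto)
  have openimg: "open (\<tau> ` I)"
  proof (rule openI)
    fix r assume "r \<in> \<tau> ` I"
    then obtain t where t: "t \<in> I" "r = \<tau> t" by auto
    obtain d where d: "d > 0" "ball t d \<subseteq> I" using I_open t openE by blast
    have t1: "t - d/2 \<in> I" "t + d/2 \<in> I" using d by (auto simp: dist_real_def subset_iff)
    have r1: "\<tau> (t - d/2) < r" "r < \<tau> (t + d/2)"
      using mono t1 t d by auto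
    have conn: "is_interval (\<tau> ` I)"
      using connected_continuous_image[OF taucont] I_int is_interval_connected
        is_interval_connected_1 by blast
    let ?e = "min (r - \<tau> (t - d/2)) (\<tau> (t + d/2) - r)"
    have "ball r ?e \<subseteq> \<tau> ` I"
    proof
      fix y assume "y \<in> ball r ?e"
      hence "\<tau> (t - d/2) \<le> y" "y \<le> \<tau> (t + d/2)" by (auto simp: dist_real_def)
      thus "y \<in> \<tau> ` I" using conn t1 unfolding is_interval_1
        by (meson image_eqI)
    qed
    moreover have "?e > 0" using r1 by simp
    ultimately show "\<exists>e>0. ball r e \<subseteq> \<tau> ` I" by blast
  qed
  define X where "X = (\<lambda>r. xcoord K U (q (g r)))"
  define c where "c = inverse (sqrt (M / m))"
  have XD: "(X has_real_derivative c * q' (g r)) (at r)" if r: "r \<in> \<tau> ` I" for r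
  proof -
    obtain t where t: "t \<in> I" "r = \<tau> t" using r by auto
    have gt: "g r = t" using gtau t by simp
    have "(X has_real_derivative xd (q t) * q' t * inverse (T t)) (at r)"
      unfolding X_def t(2)
      apply (rule DERIV_chain2[of "\<lambda>s. xcoord K U (q s)"])
      using gt t apply simp
       apply (rule DERIV_chain2[OF xD[OF qpos[OF t(1)]] q_d1[OF t(1)]])
      by (rule gD[OF t(1)])
    moreover have "xd (q t) * q' t * inverse (T t) = c * q' (g r)"
      using xdpos[OF qpos[OF t(1)]] gt by (simp add: T_def c_def field_simps)
    ultimately show ?thesis by simp
  qed
  have dX: "deriv X r = c * q' (g r)" if "r \<in> \<tau> ` I" for r
    using XD[OF that] by (rule DERIV_imp_deriv)
  have XDD: "(deriv X has_real_derivative c * q'' (g r) * inverse (T (g r))) (at r)"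
    if r: "r \<in> \<tau> ` I" for r
  proof -
    obtain t where t: "t \<in> I" "r = \<tau> t" using r by auto
    have gt: "g r = t" using gtau t by simp
    have "((\<lambda>r. c * q' (g r)) has_real_derivative c * (q'' t * inverse (T t))) (at r)"
      unfolding t(2)
      apply (rule DERIV_cmult)
      apply (rule DERIV_chain2[of q'])
      using gt t q_d2 apply simp
      by (rule gD[OF t(1)])
    hence "((\<lambda>r. c * q' (g r)) has_real_derivative c * q'' (g r) * inverse (T (g r))) (at r)"
      using gt by (simp add: mult.assoc)
    thus ?thesis
      by (rule has_field_derivative_transform_within_open[OF _ openimg r]) (simp add: dX)
  qed
  show ?thesis
  proof (intro ballI)
    fix r assume r: "r \<in> \<tau> ` I"
    obtain t where t: "t \<in> I" "r = \<tau> t" using r by auto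
    have gt: "g r = t" using gtau t by simp
    have "deriv (deriv X) r = c * q'' t * inverse (T t)"
      using DERIV_imp_deriv[OF XDD[OF r]] gt by simp
    moreover have "q'' t = - U' (q t) / m" using eqn[OF t(1)] m_pos by (simp add: field_simps)
    moreover have "M * (c * (- U' (q t) / m) * inverse (T t)) + K * xcoord K U (q t) = 0"
    proof -
      have p: "q t > 0" using qpos t by simp
      have "c * inverse (T t) = m / (M * xd (q t))"
        using m_pos M_pos unfolding c_def T_def
        by (simp add: field_simps real_sqrt_divide)
      hence "M * (c * (- U' (q t) / m) * inverse (T t)) = M / m * (- U' (q t)) * (m / (M * xd (q t)))"
        by (simp add: mult_ac divide_inverse)
      also have "\<dots> = - U' (q t) / xd (q t)"
        using m_pos M_pos xdpos[OF p] by (simp add: field_simps)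
      also have "\<dots> = - K * xcoord K U (q t)"
        using xpos[OF p] U'_pos[OF p] K_pos by (simp add: xd_def field_simps)
      finally show ?thesis by simp
    qed
    ultimately have "M * deriv (deriv X) r + K * X r = 0"
      using gt by (simp add: X_def)
    moreover have "X differentiable (at r)" using XD[OF r] real_differentiable_def by blast
    moreover have "deriv X differentiable (at r)" using XDD[OF r] real_differentiable_def by blast
    ultimately show "let X = (\<lambda>r. xcoord K U (q (inv_into I \<tau> r))) in
              X differentiable (at r) \<and> deriv X differentiable (at r) \<and>
              M * deriv (deriv X) r + K * X r = 0"
      by (simp add: X_def g_def Let_def)
  qed
qed

end
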